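(* Let $p$ be a prime, $n\ge1$, $\zeta=\zeta_{p^n}$ a primitive $p^n$th root of unity, $T=\mathbb{Z}_{(p)}[\zeta]$, $t=1-\zeta$ with valuation $v_t$. Then the tuple $\tau=(1-\zeta^j)_{j\in[0,p^n-1],\,p\nmid j}$, with $j$ in increasing order, is minimally ordered.
   Context: A tuple $(\xi_0,\dots,\xi_{r-1})$ of pairwise distinct elements of $T$ is minimally ordered if $\sum_{i\in[0,j-1]}v_t(\xi_j-\xi_i)\le\sum_{i\in[0,j-1]}v_t(\xi_k-\xi_i)$ for all $j\in[0,r-1]$ and $k\in[j+1,r-1]$. *)

theory Defs
  imports Complex_Main "HOL-Library.Extended_Nat" "HOL-Computational_Algebra.Primes"
begin

definition Zloc :: "nat \<Rightarrow> complex set" where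
  "Zloc p = {of_int a / of_int b | a b. \<not> int p dvd b}"

definition Tring :: "nat \<Rightarrow> complex \<Rightarrow> complex set" where
  "Tring p z = {(\<Sum>i<N. c i * z ^ i) | N c. \<forall>i. c i \<in> Zloc p}"

text \<open>The t-adic valuation on T, t = 1 - zeta: the supremum of all k with t^k dividing x in T
  (so v_t 0 = infinity).\<close>
definition vt :: "nat \<Rightarrow> complex \<Rightarrow> complex \<Rightarrow> enat" where
  "vt p z x = Sup {enat k | k. \<exists>y \<in> Tring p z. x = (1 - z) ^ k * y}"

definition minimally_ordered :: "complex set \<Rightarrow> (complex \<Rightarrow> enat) \<Rightarrow> complex list \<Rightarrow> bool" where
  "minimally_ordered T v xs \<longleftrightarrow> distinct xs \<and> set xs \<subseteq> T \<and>
     (\<forall>j < length xs. \<forall>k. j < k \<and> k < length xs \<longrightarrow>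
        (\<Sum>i<j. v (xs ! j - xs ! i)) \<le> (\<Sum>i<j. v (xs ! k - xs ! i)))"

end

theory Submission
  imports Defs "HOL-Computational_Algebra.Polynomial" "HOL-Number_Theory.Cong"
begin



lemma Zloc_add: assumes "prime p" "a \<in> Zloc p" "b \<in> Zloc p" shows "a + b \<in> Zloc p"
proof -
  obtain a1 a2 where a: "a = of_int a1 / of_int a2" "\<not> int p dvd a2" using assms(2) unfolding Zloc_def by auto
  obtain b1 b2 where b: "b = of_int b1 / of_int b2" "\<not> int p dvd b2" using assms(3) unfolding Zloc_def by auto
  have nz: "a2 \<noteq> 0" "b2 \<noteq> 0" using a b by auto
  have "\<not> int p dvd a2 * b2" using a b assms(1)
    by (metis prime_dvd_mult_iff prime_nat_int_transfer)
  moreover have "a + b = of_int (a1 * b2 + b1 * a2) / of_int (a2 * b2)" using nz a b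
    by (simp add: field_simps)
  ultimately show ?thesis unfolding Zloc_def by blast
qed

lemma Zloc_mult: assumes "prime p" "a \<in> Zloc p" "b \<in> Zloc p" shows "a * b \<in> Zloc p"
proof -
  obtain a1 a2 where a: "a = of_int a1 / of_int a2" "\<not> int p dvd a2" using assms(2) unfolding Zloc_def by auto
  obtain b1 b2 where b: "b = of_int b1 / of_int b2" "\<not> int p dvd b2" using assms(3) unfolding Zloc_def by auto
  have "\<not> int p dvd a2 * b2" using a b assms(1)
    by (metis prime_dvd_mult_iff prime_nat_int_transfer)
  moreover have "a * b = of_int (a1 * b1) / of_int (a2 * b2)" using a b
    by (simp add: field_simps)
  ultimately show ?thesis unfolding Zloc_def by blast
qed

lemma Zloc_int: assumes "prime p" shows "of_int k \<in> Zloc p"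
proof -
  have "p \<noteq> 1" using assms by auto
  then have "\<not> int p dvd 1" by simp
  moreover have "(of_int k :: complex) = of_int k / of_int 1" by simp
  ultimately show ?thesis unfolding Zloc_def by blast
qed

lemma Zloc_0: "prime p \<Longrightarrow> 0 \<in> Zloc p" using Zloc_int[of p 0] by simp
lemma Zloc_1: "prime p \<Longrightarrow> 1 \<in> Zloc p" using Zloc_int[of p 1] by simp
lemma Zloc_m1: "prime p \<Longrightarrow> -1 \<in> Zloc p" using Zloc_int[of p "-1"] by simp

lemma Zloc_sum: assumes "prime p" "\<And>i. i \<in> A \<Longrightarrow> f i \<in> Zloc p" shows "sum f A \<in> Zloc p"
  using assms(2)
proof (induction A rule: infinite_finite_induct)
  case (infinite A) then show ?case using Zloc_0[OF assms(1)] by simp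
next
  case empty then show ?case using Zloc_0[OF assms(1)] by simp
next
  case (insert x F) then show ?case using Zloc_add[OF assms(1)] by simp
qed


lemma Tring_poly: "x \<in> Tring p z \<longleftrightarrow> (\<exists>q. (\<forall>i. coeff q i \<in> Zloc p) \<and> x = poly q z)"
proof
  assume "x \<in> Tring p z"
  then obtain N c where x: "x = (\<Sum>i<N. c i * z ^ i)" "\<forall>i. c i \<in> Zloc p" unfolding Tring_def by auto
  define q where "q = (\<Sum>i<N. monom (c i) i)"
  have cq: "coeff q i = (if i < N then c i else 0)" for i
    unfolding q_def by (simp add: coeff_sum coeff_monom)
  have "\<forall>i. coeff q i \<in> Zloc p"
  proof
    fix i
    show "coeff q i \<in> Zloc p"
    proof (cases "i < N")
      case True then show ?thesis using cq x by simp
    next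
      case False
      then have "coeff q i = 0" using cq by simp
      moreover have "0 \<in> Zloc p"
      proof -
        obtain a b where ab: "\<not> int p dvd b" using x(2) unfolding Zloc_def by blast
        have "(0::complex) = of_int 0 / of_int b" by simp
        then show ?thesis using ab unfolding Zloc_def by blast
      qed
      ultimately show ?thesis by simp
    qed
  qed
  moreover have "x = poly q z" unfolding q_def x by (simp add: poly_sum poly_monom)
  ultimately show "\<exists>q. (\<forall>i. coeff q i \<in> Zloc p) \<and> x = poly q z" by blast
next
  assume "\<exists>q. (\<forall>i. coeff q i \<in> Zloc p) \<and> x = poly q z"
  then obtain q where q: "\<forall>i. coeff q i \<in> Zloc p" "x = poly q z" by blast
  have "x = (\<Sum>i<Suc (degree q). coeff q i * z ^ i)"
    using q(2) by (simp add: poly_altdef lessThan_Suc_atMost)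
  then show "x \<in> Tring p z" unfolding Tring_def using q(1) by blast
qed


lemma Tring_add: assumes "prime p" "a \<in> Tring p z" "b \<in> Tring p z" shows "a + b \<in> Tring p z"
proof -
  obtain q1 where q1: "\<forall>i. coeff q1 i \<in> Zloc p" "a = poly q1 z" using assms(2) Tring_poly by blast
  obtain q2 where q2: "\<forall>i. coeff q2 i \<in> Zloc p" "b = poly q2 z" using assms(3) Tring_poly by blast
  have "\<forall>i. coeff (q1 + q2) i \<in> Zloc p" using q1 q2 Zloc_add[OF assms(1)] by simp
  moreover have "a + b = poly (q1 + q2) z" using q1 q2 by simp
  ultimately show ?thesis using Tring_poly by blast
qed

lemma Tring_mult: assumes "prime p" "a \<in> Tring p z" "b \<in> Tring p z" shows "a * b \<in> Tring p z"
proof -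
  obtain q1 where q1: "\<forall>i. coeff q1 i \<in> Zloc p" "a = poly q1 z" using assms(2) Tring_poly by blast
  obtain q2 where q2: "\<forall>i. coeff q2 i \<in> Zloc p" "b = poly q2 z" using assms(3) Tring_poly by blast
  have "\<forall>i. coeff (q1 * q2) i \<in> Zloc p"
  proof
    fix i show "coeff (q1 * q2) i \<in> Zloc p"
      unfolding coeff_mult by (rule Zloc_sum[OF assms(1)]) (use q1 q2 Zloc_mult[OF assms(1)] in auto)
  qed
  moreover have "a * b = poly (q1 * q2) z" using q1 q2 by simp
  ultimately show ?thesis using Tring_poly by blast
qed

lemma Tring_const: assumes "c \<in> Zloc p" "prime p" shows "c * z ^ k \<in> Tring p z"
proof -
  have "\<forall>i. coeff (monom c k) i \<in> Zloc p" using assms Zloc_0 by (simp add: coeff_monom)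
  moreover have "c * z ^ k = poly (monom c k) z" by (simp add: poly_monom)
  ultimately show ?thesis using Tring_poly by blast
qed

lemma Tring_pow: "prime p \<Longrightarrow> z ^ k \<in> Tring p z"
  using Tring_const[of 1 p z k] Zloc_1 by simp

lemma Tring_diff: assumes "prime p" "a \<in> Tring p z" "b \<in> Tring p z" shows "a - b \<in> Tring p z"
proof -
  have "-1 * z ^ 0 \<in> Tring p z" using Tring_const[OF Zloc_m1] assms(1) by blast
  then have "(-1) * b \<in> Tring p z" using Tring_mult[OF assms(1)] assms(3) by fastforce
  then show ?thesis using Tring_add[OF assms(1) assms(2)] by fastforce
qed

lemma Tring_sum: assumes "prime p" "\<And>i. i \<in> A \<Longrightarrow> f i \<in> Tring p z" shows "sum f A \<in> Tring p z"
  using assms(2)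
proof (induction A rule: infinite_finite_induct)
  case (infinite A) then show ?case using Tring_const[OF Zloc_0[OF assms(1)] assms(1), of z 0] by simp
next
  case empty then show ?case using Tring_const[OF Zloc_0[OF assms(1)] assms(1), of z 0] by simp
next
  case (insert x F) then show ?case using Tring_add[OF assms(1)] by simp
qed

lemma vt_dvd: assumes "prime p" "x = d * y" "y \<in> Tring p z" shows "vt p z d \<le> vt p z x"
  unfolding vt_def
proof (rule Sup_subset_mono, safe)
  fix k y' assume "y' \<in> Tring p z" "d = (1 - z) ^ k * y'"
  then have "x = (1 - z) ^ k * (y' * y)" "y' * y \<in> Tring p z" using assms Tring_mult by auto
  then show "\<exists>k'. enat k = enat k' \<and> (\<exists>y\<in>Tring p z. x = (1 - z) ^ k' * y)" by blast
qed



lemma pow_mod: assumes "(z::complex) ^ N = 1" shows "z ^ a = z ^ (a mod N)"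
proof -
  have "z ^ a = z ^ (N * (a div N) + a mod N)" by (simp only: mult_div_mod_eq)
  also have "\<dots> = (z ^ N) ^ (a div N) * z ^ (a mod N)" by (simp only: power_add power_mult)
  finally show ?thesis using assms by simp
qed

lemma V2:
  assumes p: "prime p" and z: "z ^ (p ^ n) = 1" and m: "0 < m" and d: "p ^ multiplicity p m dvd m'"
  shows "vt p z (1 - z ^ m) \<le> vt p z (1 - z ^ m')"
proof -
  define e where "e = multiplicity p m"
  have nu: "\<not> is_unit p" using p not_prime_unit by blast
  obtain u where u: "m = p ^ e * u" "\<not> p dvd u"
    using multiplicity_decompose'[of m p, OF _ nu] m unfolding e_def by auto
  have "coprime u (p ^ n)" using u(2) p
    by (metis coprime_commute coprime_power_right_iff prime_imp_coprime)
  then obtain x where x: "[u * x = Suc 0] (mod p ^ n)" using cong_solve_coprime_nat by blast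
  obtain u' where u': "m' = p ^ e * u'" using d e_def by (auto elim: dvdE)
  have zux: "z ^ (u * x) = z"
  proof -
    have "z ^ (u * x) = z ^ ((u * x) mod p ^ n)" by (rule pow_mod[OF z])
    also have "\<dots> = z ^ (Suc 0 mod p ^ n)" using x unfolding cong_def by simp
    also have "\<dots> = z ^ Suc 0" using pow_mod[OF z, of "Suc 0"] by simp
    finally show ?thesis by simp
  qed
  define s where "s = x * u'"
  have ms: "m * s = (u * x) * (p ^ e * u')" unfolding s_def u(1) by (simp only: mult_ac)
  have "(z ^ m) ^ s = (z ^ (u * x)) ^ (p ^ e * u')"
    by (simp only: power_mult[symmetric] ms)
  also have "\<dots> = z ^ m'" using zux u' by simp
  finally have eq: "1 - z ^ m' = (1 - z ^ m) * (\<Sum>i<s. (z ^ m) ^ i)"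
    using one_diff_power_eq[of "z ^ m" s] by simp
  have "(\<Sum>i<s. (z ^ m) ^ i) \<in> Tring p z"
    by (rule Tring_sum[OF p]) (simp add: power_mult[symmetric] Tring_pow[OF p])
  then show ?thesis by (rule vt_dvd[OF p eq])
qed

lemma vt_shift:
  assumes p: "prime p" and z: "z ^ (p ^ n) = 1" and ab: "a < b"
  shows "vt p z (z ^ a - z ^ b) = vt p z (1 - z ^ (b - a))"
proof (rule antisym)
  define w where "w = z ^ ((p ^ n - 1) * a)"
  have "p ^ n \<ge> 1" using prime_gt_0_nat[OF p] by (simp add: Suc_leI)
  then have "a + (p ^ n - 1) * a = p ^ n * a"
    by (metis add.commute le_add_diff_inverse2 mult.commute mult_Suc_right plus_1_eq_Suc)
  then have "z ^ a * w = z ^ (p ^ n * a)" unfolding w_def by (simp only: power_add[symmetric])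
  also have "\<dots> = 1" by (simp only: power_mult z power_one)
  finally have zw: "z ^ a * w = 1" .
  have zb: "z ^ b = z ^ (b - a) * z ^ a" using ab by (simp add: power_add[symmetric])
  have "(z ^ a - z ^ b) * w = z ^ a * w - z ^ (b - a) * (z ^ a * w)" unfolding zb by (simp add: algebra_simps)
  then have e1: "1 - z ^ (b - a) = (z ^ a - z ^ b) * w" unfolding zw by simp
  show "vt p z (z ^ a - z ^ b) \<le> vt p z (1 - z ^ (b - a))"
    by (rule vt_dvd[OF p e1]) (simp add: w_def Tring_pow[OF p])
  have e2: "z ^ a - z ^ b = (1 - z ^ (b - a)) * z ^ a" unfolding zb by (simp add: algebra_simps)
  show "vt p z (1 - z ^ (b - a)) \<le> vt p z (z ^ a - z ^ b)"
    by (rule vt_dvd[OF p e2]) (simp add: Tring_pow[OF p])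
qed

lemma vt_mult:
  assumes p: "prime p" and z: "z ^ (p ^ n) = 1" and m: "0 < m"
  shows "vt p z (1 - z ^ m) = vt p z (1 - z ^ (p ^ multiplicity p m))"
proof (rule antisym)
  show "vt p z (1 - z ^ m) \<le> vt p z (1 - z ^ (p ^ multiplicity p m))"
    by (rule V2[OF p z m]) simp
  have pe: "0 < p ^ multiplicity p m" using p by (simp add: prime_gt_0_nat)
  show "vt p z (1 - z ^ (p ^ multiplicity p m)) \<le> vt p z (1 - z ^ m)"
    by (rule V2[OF p z pe]) (use p in \<open>simp add: multiplicity_dvd\<close>)
qed

lemma g_mono:
  assumes p: "prime p" and z: "z ^ (p ^ n) = 1"
  shows "mono (\<lambda>e. vt p z (1 - z ^ (p ^ e)))"
proof (rule monoI)
  fix e e' :: nat assume "e \<le> e'"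
  have pe: "0 < p ^ e" using p by (simp add: prime_gt_0_nat)
  show "vt p z (1 - z ^ (p ^ e)) \<le> vt p z (1 - z ^ (p ^ e'))"
    by (rule V2[OF p z pe]) (use p \<open>e \<le> e'\<close> in \<open>simp add: le_imp_power_dvd\<close>)
qed



lemma sum_dom:
  fixes g :: "nat \<Rightarrow> enat" and f f' :: "'a \<Rightarrow> nat"
  assumes "finite S" "finite S'" "card S = card S'" "mono g"
    and "\<And>e. card {y\<in>S. e \<le> f y} \<le> card {y\<in>S'. e \<le> f' y}"
  shows "(\<Sum>y\<in>S. g (f y)) \<le> (\<Sum>y\<in>S'. g (f' y))"
  using assms
proof (induction "card S" arbitrary: S S')
  case 0
  then show ?case by simp
next
  case (Suc c)
  then have ne: "S \<noteq> {}" "S' \<noteq> {}" by auto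
  have "Max (f ` S) \<in> f ` S" using ne Suc.prems(1) by (intro Max_in) auto
  then obtain y0 where y0: "y0 \<in> S" "f y0 = Max (f ` S)" by (metis imageE)
  have "Max (f' ` S') \<in> f' ` S'" using ne Suc.prems(2) by (intro Max_in) auto
  then obtain y1 where y1: "y1 \<in> S'" "f' y1 = Max (f' ` S')" by (metis imageE)
  define M where "M = f y0"
  have fM: "f y \<le> M" if "y \<in> S" for y unfolding M_def y0(2) using that Suc.prems by simp
  have f'M: "f' y \<le> f' y1" if "y \<in> S'" for y unfolding y1(2) using that Suc.prems by simp
  have "card {y\<in>S. M \<le> f y} \<ge> 1"
  proof -
    have "y0 \<in> {y\<in>S. M \<le> f y}" using y0 M_def by simp
    then show ?thesis using Suc.prems(1) by (metis (no_types, lifting) One_nat_def Suc_leI card_gt_0_iff empty_iff finite_subset mem_Collect_eq subsetI)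
  qed
  then have "card {y\<in>S'. M \<le> f' y} \<ge> 1" using Suc.prems(5)[of M] by linarith
  then obtain y where "y \<in> S'" "M \<le> f' y" by (metis (no_types, lifting) card.empty empty_Collect_eq not_one_le_zero)
  then have MM: "M \<le> f' y1" using f'M by fastforce
  have IH: "(\<Sum>y\<in>S - {y0}. g (f y)) \<le> (\<Sum>y\<in>S' - {y1}. g (f' y))"
  proof (rule Suc.hyps)
    show "c = card (S - {y0})" using Suc.hyps(2) y0 Suc.prems by simp
    show "finite (S - {y0})" "finite (S' - {y1})" "mono g" using Suc.prems by auto
    show "card (S - {y0}) = card (S' - {y1})" using Suc.prems y0 y1 by simp
    fix e
    show "card {y \<in> S - {y0}. e \<le> f y} \<le> card {y \<in> S' - {y1}. e \<le> f' y}"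
    proof (cases "e \<le> M")
      case True
      have a: "{y \<in> S - {y0}. e \<le> f y} = {y\<in>S. e \<le> f y} - {y0}" by auto
      have b: "{y \<in> S' - {y1}. e \<le> f' y} = {y\<in>S'. e \<le> f' y} - {y1}" by auto
      have "y0 \<in> {y\<in>S. e \<le> f y}" using True y0 M_def by simp
      moreover have "y1 \<in> {y\<in>S'. e \<le> f' y}" using True MM y1 by simp
      ultimately show ?thesis unfolding a b using Suc.prems(1,2) Suc.prems(5)[of e]
        by (simp add: card_Diff_singleton)
    next
      case False
      then have "{y \<in> S - {y0}. e \<le> f y} = {}" using fM by fastforce
      then have "card {y \<in> S - {y0}. e \<le> f y} = 0" by (simp only: card.empty)
      then show ?thesis by linarith
    qed
  qed
  have "(\<Sum>y\<in>S. g (f y)) = g (f y0) + (\<Sum>y\<in>S - {y0}. g (f y))"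
    using Suc.prems(1) y0(1) by (simp add: sum.remove)
  also have "\<dots> \<le> g (f' y1) + (\<Sum>y\<in>S' - {y1}. g (f' y))"
    using IH MM M_def Suc.prems(4) by (intro add_mono) (auto simp: mono_def)
  also have "\<dots> = (\<Sum>y\<in>S'. g (f' y))"
    using Suc.prems(2) y1(1) by (simp add: sum.remove)
  finally show ?case .
qed

lemma count_le:
  fixes p x x' e :: nat
  assumes p: "prime p" and xx: "x < x'" and px: "\<not> p dvd x'"
  shows "card {y\<in>{y. y < x \<and> \<not> p dvd y}. e \<le> multiplicity p (x - y)}
       \<le> card {y\<in>{y. y < x \<and> \<not> p dvd y}. e \<le> multiplicity p (x' - y)}"
proof (cases "e = 0")
  case True then show ?thesis by simp
next
  case False
  define q where "q = p ^ e"
  have q0: "q > 0" unfolding q_def using prime_gt_0_nat[OF p] by simp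
  have pq: "p dvd q" unfolding q_def using False by simp
  have LHS: "card {y\<in>{y. y < x \<and> \<not> p dvd y}. e \<le> multiplicity p (x - y)} \<le> x div q"
  proof -
    let ?A = "{y\<in>{y. y < x \<and> \<not> p dvd y}. e \<le> multiplicity p (x - y)}"
    have dv: "q dvd x - y" if "y \<in> ?A" for y
      using that power_dvd_iff_le_multiplicity[where p=p and n=e and x="x - y"] p unfolding q_def by auto
    have "inj_on (\<lambda>y. (x - y) div q) ?A"
    proof (rule inj_onI)
      fix y y' assume yA: "y \<in> ?A" "y' \<in> ?A" and eq: "(x - y) div q = (x - y') div q"
      have "x - y = (x - y) div q * q" using dv[OF yA(1)] by simp
      also have "\<dots> = (x - y') div q * q" using eq by simp
      also have "\<dots> = x - y'" using dv[OF yA(2)] by simp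
      finally show "y = y'" using yA by auto
    qed
    moreover have "(\<lambda>y. (x - y) div q) ` ?A \<subseteq> {1..x div q}"
    proof
      fix t assume "t \<in> (\<lambda>y. (x - y) div q) ` ?A"
      then obtain y where y: "y \<in> ?A" "t = (x - y) div q" by blast
      have "x - y > 0" using y by auto
      with dv[OF y(1)] have "x - y \<ge> q" by (simp add: dvd_imp_le)
      then have "t \<ge> 1" using y(2) q0 by (simp add: div_le_mono[of q "x - y" q, simplified] Suc_leI div_greater_zero_iff)
      moreover have "t \<le> x div q" using y(2) by (simp add: div_le_mono)
      ultimately show "t \<in> {1..x div q}" by simp
    qed
    ultimately have "card ?A \<le> card {1..x div q}" by (intro card_inj_on_le) auto
    then show ?thesis by simp
  qed
  have RHS: "x div q \<le> card {y\<in>{y. y < x \<and> \<not> p dvd y}. e \<le> multiplicity p (x' - y)}"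
  proof -
    let ?B = "{y\<in>{y. y < x \<and> \<not> p dvd y}. e \<le> multiplicity p (x' - y)}"
    define h where "h t = x' mod q + q * t" for t
    have "inj_on h {..<x div q}" unfolding h_def using q0 by (intro inj_onI) simp
    moreover have "h ` {..<x div q} \<subseteq> ?B"
    proof
      fix y assume "y \<in> h ` {..<x div q}"
      then obtain t where t: "t < x div q" "y = h t" by blast
      have "x' mod q < q" using q0 by simp
      then have "y < q * Suc t" unfolding t(2) h_def by simp
      also have "\<dots> \<le> q * (x div q)" using t(1) by (intro mult_le_mono2) simp
      also have "\<dots> \<le> x" by (simp add: times_div_less_eq_dividend)
      finally have yx: "y < x" .
      have ymod: "y mod q = x' mod q" unfolding t(2) h_def by simp
      have "\<not> p dvd y"
      proof
        assume "p dvd y"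
        then have "p dvd y mod q" using pq by (simp add: dvd_mod)
        then have "p dvd x' mod q" using ymod by simp
        moreover have "x' = q * (x' div q) + x' mod q" by simp
        ultimately have "p dvd x'" using pq by (metis dvd_add dvd_mult2)
        then show False using px by simp
      qed
      moreover have "q dvd x' - y" using ymod yx xx mod_eq_dvd_iff_nat[of y x' q] by simp
      moreover have "\<not> x' \<le> y" "p \<noteq> Suc 0" using yx xx p by auto
      ultimately have "e \<le> multiplicity p (x' - y)"
        using power_dvd_iff_le_multiplicity[where p=p and n=e and x="x' - y"] unfolding q_def by simp
      moreover have "\<not> p dvd y" by fact
      ultimately show "y \<in> ?B" using yx by simp
    qed
    moreover have "finite ?B" by auto
    ultimately have "card {..<x div q} \<le> card ?B" by (intro card_inj_on_le) auto
    then show ?thesis by simp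
  qed
  show ?thesis using LHS RHS by linarith
qed



lemma D1:
  assumes p: "prime p" and z: "z ^ (p ^ n) = 1" and ax: "a < x"
  shows "vt p z ((1 - z ^ x) - (1 - z ^ a)) = vt p z (1 - z ^ (p ^ multiplicity p (x - a)))"
proof -
  have "(1 - z ^ x) - (1 - z ^ a) = z ^ a - z ^ x" by simp
  then have "vt p z ((1 - z ^ x) - (1 - z ^ a)) = vt p z (1 - z ^ (x - a))"
    using vt_shift[OF p z ax] by simp
  also have "\<dots> = vt p z (1 - z ^ (p ^ multiplicity p (x - a)))"
    by (rule vt_mult[OF p z]) (use ax in simp)
  finally show ?thesis .
qed

lemma prefix_image:
  fixes L :: "nat list"
  assumes sL: "sorted_wrt (<) L" and setL: "set L = {j. j < N \<and> \<not> p dvd j}" and j: "j < length L"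
  shows "(\<lambda>i. L ! i) ` {..<j} = {y. y < L ! j \<and> \<not> p dvd y}"
proof (intro equalityI subsetI)
  fix y assume "y \<in> (\<lambda>i. L ! i) ` {..<j}"
  then obtain i where i: "i < j" "y = L ! i" by blast
  have "L ! i < L ! j" using sorted_wrt_nth_less[OF sL i(1) j] .
  moreover have "L ! i \<in> set L" using i j by simp
  ultimately show "y \<in> {y. y < L ! j \<and> \<not> p dvd y}" using setL i by auto
next
  fix y assume y: "y \<in> {y. y < L ! j \<and> \<not> p dvd y}"
  have "L ! j \<in> set L" using j by simp
  then have "y \<in> set L" using setL y by auto
  then obtain i where i: "i < length L" "L ! i = y" by (metis in_set_conv_nth)
  have "i < j"
  proof (rule ccontr)
    assume "\<not> i < j"
    then have "i = j \<or> j < i" by auto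
    then have "L ! j \<le> L ! i" using sorted_wrt_nth_less[OF sL _ i(1), of j] by (auto simp: less_imp_le)
    then show False using i y by simp
  qed
  then show "y \<in> (\<lambda>i. L ! i) ` {..<j}" using i by blast
qed

theorem lemma2p6:
  fixes p n :: nat and \<zeta> :: complex
  assumes "prime p" and "n \<ge> 1"
    and "\<zeta> ^ (p ^ n) = 1" and "\<forall>k. 0 < k \<and> k < p ^ n \<longrightarrow> \<zeta> ^ k \<noteq> 1"
  shows "minimally_ordered (Tring p \<zeta>) (vt p \<zeta>)
           (map (\<lambda>j. 1 - \<zeta> ^ j) (filter (\<lambda>j. \<not> p dvd j) [0..<p ^ n]))"
proof -
  note p = assms(1) and z = assms(3)
  define L where "L = filter (\<lambda>j. \<not> p dvd j) [0..<p ^ n]"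
  define g where "g e = vt p \<zeta> (1 - \<zeta> ^ (p ^ e))" for e
  have sL: "sorted_wrt (<) L" unfolding L_def by (simp add: sorted_wrt_filter)
  have dL: "distinct L" unfolding L_def by simp
  have setL: "set L = {j. j < p ^ n \<and> \<not> p dvd j}" unfolding L_def by auto
  have gm: "mono g" using g_mono[OF p z] unfolding g_def .
  have zn0: "\<zeta> \<noteq> 0" using z p by (metis power_0_left prime_gt_0_nat zero_less_power zero_neq_one less_numeral_extra(3))
  have inj: "inj_on (\<lambda>j. 1 - \<zeta> ^ j) (set L)"
  proof -
    have *: "\<zeta> ^ a \<noteq> \<zeta> ^ b" if "a < b" "b < p ^ n" for a b
    proof
      assume eq: "\<zeta> ^ a = \<zeta> ^ b"
      have "\<zeta> ^ b = \<zeta> ^ (b - a) * \<zeta> ^ a" using that by (simp add: power_add[symmetric])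
      then have "\<zeta> ^ (b - a) = 1" using eq zn0 by simp
      moreover have "0 < b - a" "b - a < p ^ n" using that by auto
      ultimately show False using assms(4) by blast
    qed
    show ?thesis
    proof (rule inj_onI)
      fix a b assume ab: "a \<in> set L" "b \<in> set L" "1 - \<zeta> ^ a = 1 - \<zeta> ^ b"
      then have "\<zeta> ^ a = \<zeta> ^ b" by simp
      then show "a = b" using *[of a b] *[of b a] ab(1,2) setL by (metis linorder_neqE_nat mem_Collect_eq)
    qed
  qed
  have main: "(\<Sum>i<j. vt p \<zeta> (xs ! j - xs ! i)) \<le> (\<Sum>i<j. vt p \<zeta> (xs ! k - xs ! i))"
    if xs: "xs = map (\<lambda>j. 1 - \<zeta> ^ j) L" and jk: "j < k" "k < length xs" for xs j k
  proof -
    have kL: "k < length L" "j < length L" using jk xs by auto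
    define x where "x = L ! j"
    define x' where "x' = L ! k"
    have xx: "x < x'" unfolding x_def x'_def using sorted_wrt_nth_less[OF sL jk(1) kL(1)] .
    have px: "\<not> p dvd x'" using setL kL unfolding x'_def using nth_mem by blast
    define S where "S = {y. y < x \<and> \<not> p dvd y}"
    have img: "(\<lambda>i. L ! i) ` {..<j} = S" unfolding S_def x_def by (rule prefix_image[OF sL setL kL(2)])
    have injL: "inj_on (\<lambda>i. L ! i) {..<j}" using dL kL by (intro inj_onI) (simp add: nth_eq_iff_index_eq)
    have finS: "finite S" unfolding S_def by auto
    have eq1: "(\<Sum>i<j. vt p \<zeta> (xs ! j - xs ! i)) = (\<Sum>y\<in>S. g (multiplicity p (x - y)))"
    proof -
      have "(\<Sum>i<j. vt p \<zeta> (xs ! j - xs ! i)) = (\<Sum>i<j. g (multiplicity p (x - L ! i)))"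
      proof (rule sum.cong)
        fix i assume "i \<in> {..<j}"
        then have i: "i < j" by simp
        have "L ! i < x" unfolding x_def using sorted_wrt_nth_less[OF sL i kL(2)] .
        moreover have "xs ! j = 1 - \<zeta> ^ x" "xs ! i = 1 - \<zeta> ^ (L ! i)" using xs kL i unfolding x_def by auto
        ultimately show "vt p \<zeta> (xs ! j - xs ! i) = g (multiplicity p (x - L ! i))"
          unfolding g_def using D1[OF p z] by simp
      qed simp
      also have "\<dots> = (\<Sum>y\<in>S. g (multiplicity p (x - y)))"
        unfolding img[symmetric] by (simp add: sum.reindex[OF injL])
      finally show ?thesis .
    qed
    have eq2: "(\<Sum>i<j. vt p \<zeta> (xs ! k - xs ! i)) = (\<Sum>y\<in>S. g (multiplicity p (x' - y)))"
    proof -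
      have "(\<Sum>i<j. vt p \<zeta> (xs ! k - xs ! i)) = (\<Sum>i<j. g (multiplicity p (x' - L ! i)))"
      proof (rule sum.cong)
        fix i assume "i \<in> {..<j}"
        then have i: "i < k" using jk by simp
        have "L ! i < x'" unfolding x'_def using sorted_wrt_nth_less[OF sL i kL(1)] .
        moreover have "xs ! k = 1 - \<zeta> ^ x'" "xs ! i = 1 - \<zeta> ^ (L ! i)" using xs kL i jk unfolding x'_def by auto
        ultimately show "vt p \<zeta> (xs ! k - xs ! i) = g (multiplicity p (x' - L ! i))"
          unfolding g_def using D1[OF p z] by simp
      qed simp
      also have "\<dots> = (\<Sum>y\<in>S. g (multiplicity p (x' - y)))"
        unfolding img[symmetric] by (simp add: sum.reindex[OF injL])
      finally show ?thesis .
    qed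
    have "(\<Sum>y\<in>S. g (multiplicity p (x - y))) \<le> (\<Sum>y\<in>S. g (multiplicity p (x' - y)))"
      by (rule sum_dom[OF finS finS refl gm]) (use count_le[OF p xx px] in \<open>simp add: S_def\<close>)
    then show ?thesis using eq1 eq2 by simp
  qed
  show ?thesis
    unfolding minimally_ordered_def L_def[symmetric]
  proof (intro conjI allI impI)
    show "distinct (map (\<lambda>j. 1 - \<zeta> ^ j) L)" using dL inj by (simp add: distinct_map)
    show "set (map (\<lambda>j. 1 - \<zeta> ^ j) L) \<subseteq> Tring p \<zeta>"
    proof
      fix w assume "w \<in> set (map (\<lambda>j. 1 - \<zeta> ^ j) L)"
      then obtain j where "w = 1 - \<zeta> ^ j" by auto
      moreover have "\<zeta> ^ 0 - \<zeta> ^ j \<in> Tring p \<zeta>" by (intro Tring_diff[OF p] Tring_pow[OF p])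
      ultimately show "w \<in> Tring p \<zeta>" by simp
    qed
    fix j k
    assume "j < length (map (\<lambda>j. 1 - \<zeta> ^ j) L)" "j < k \<and> k < length (map (\<lambda>j. 1 - \<zeta> ^ j) L)"
    then show "(\<Sum>i<j. vt p \<zeta> (map (\<lambda>j. 1 - \<zeta> ^ j) L ! j - map (\<lambda>j. 1 - \<zeta> ^ j) L ! i))
         \<le> (\<Sum>i<j. vt p \<zeta> (map (\<lambda>j. 1 - \<zeta> ^ j) L ! k - map (\<lambda>j. 1 - \<zeta> ^ j) L ! i))"
      using main[OF refl] by blast
  qed
qed

end
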